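(* Let $\mathcal{M}=\langle S,\iota,\mathsf{Act},P,\mathsf{Z},\mathsf{obs}\rangle$ be an MDP, let $B\subseteq\mathsf{Bel}$ be a convex set of beliefs with finitely many vertices, and let $z\in\mathsf{Z}$. Then $V(\mathsf{est}^{\mathsf{up}}(B,z))=V(\mathsf{est}^{\mathsf{up}}(V(B),z))$.
   Context: An MDP is a tuple $\langle S,\iota,\mathsf{Act},P,\mathsf{Z},\mathsf{obs}\rangle$: finite state set $S$, initial distribution $\iota\in\mathsf{Distr}(S)$, finite action set $\mathsf{Act}$, partial transition function $P\colon S\times\mathsf{Act}\rightharpoonup\mathsf{Distr}(S)$ (write $P(s,\alpha,s')=P(s,\alpha)(s')$), finite observation set $\mathsf{Z}$, observation function $\mathsf{obs}\colon S\to\mathsf{Distr}(\mathsf{Z})$; $\mathsf{AvAct}(s)=\{\alpha\mid P(s,\alpha)\text{ defined}\}\neq\emptyset$. Beliefs: $\mathsf{Bel}=\mathsf{Distr}(S)\cup\{\mathbf{0}\}$ ($\mathbf{0}$ the zero function on $S$), viewed as vectors in $\mathbb{R}^S$. For $\mathsf{bel}\in\mathsf{Bel}$ and $z\in\mathsf{Z}$, $\mathsf{bel}'\in\mathsf{est}^{\mathsf{up}}(\mathsf{bel},z)$ iff there is $\varsigma\colon S\to\mathsf{Distr}(\mathsf{Act})$ with $\varsigma(s)$ supported in $\mathsf{AvAct}(s)$ such that for all $s'$: $\mathsf{bel}'(s')=\dfrac{\sum_s\mathsf{bel}(s)\sum_\alpha\varsigma(s)(\alpha)P(s,\alpha,s')\mathsf{obs}(s')(z)}{\sum_s\mathsf{bel}(s)\sum_\alpha\varsigma(s)(\alpha)\sum_{\hat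 s}P(s,\alpha,\hat s)\mathsf{obs}(\hat s)(z)}$ (with $0/0=0$). For $B\subseteq\mathsf{Bel}$, $\mathsf{est}^{\mathsf{up}}(B,z)=\bigcup_{\mathsf{bel}\in B}\mathsf{est}^{\mathsf{up}}(\mathsf{bel},z)$. $B$ is convex if it equals its convex hull. A belief $\mathsf{bel}\in B$ is interior if it is a convex combination of elements of $B\setminus\{\mathsf{bel}\}$; $V(B)\subseteq B$ denotes the set of non-interior elements (the vertices of the convex hull of $B$). *)

theory Defs
  imports "HOL-Analysis.Analysis"
begin

text \<open>States, actions, observations are finite types 's, 'a, 'z (S, Act, Z are UNIV).
  Beliefs are vectors in R^S, represented as real ^ 's.\<close>

definition is_distr :: "('s::finite \<Rightarrow> real) \<Rightarrow> bool" where
  "is_distr d \<longleftrightarrow> (\<forall>s. 0 \<le> d s) \<and> (\<Sum>s\<in>UNIV. d s) = 1"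

definition AvAct :: "('s \<Rightarrow> 'a \<Rightarrow> ('s \<Rightarrow> real) option) \<Rightarrow> 's \<Rightarrow> 'a set" where
  "AvAct P s = {a. P s a \<noteq> None}"

definition is_MDP :: "('s::finite \<Rightarrow> real) \<Rightarrow> ('s \<Rightarrow> 'a::finite \<Rightarrow> ('s \<Rightarrow> real) option)
    \<Rightarrow> ('s \<Rightarrow> 'z::finite \<Rightarrow> real) \<Rightarrow> bool" where
  "is_MDP iota P obs \<longleftrightarrow> is_distr iota
     \<and> (\<forall>s a d. P s a = Some d \<longrightarrow> is_distr d)
     \<and> (\<forall>s. is_distr (obs s))
     \<and> (\<forall>s. AvAct P s \<noteq> {})"

text \<open>P(s,a,s'), only used where P s a is defined (otherwise multiplied by zero).\<close>
definition Pr :: "('s \<Rightarrow> 'a \<Rightarrow> ('s \<Rightarrow> real) option) \<Rightarrow> 's \<Rightarrow> 'a \<Rightarrow> 's \<Rightarrow> real" where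
  "Pr P s a s' = (case P s a of None \<Rightarrow> 0 | Some d \<Rightarrow> d s')"

definition Bel :: "(real ^ 's::finite) set" where
  "Bel = {b. is_distr (\<lambda>s. b $ s)} \<union> {0}"

text \<open>Memoryless randomized state-dependent choice of available actions.\<close>
definition valid_sched :: "('s \<Rightarrow> 'a \<Rightarrow> ('s \<Rightarrow> real) option) \<Rightarrow> ('s \<Rightarrow> 'a::finite \<Rightarrow> real) \<Rightarrow> bool" where
  "valid_sched P \<sigma> \<longleftrightarrow> (\<forall>s. is_distr (\<sigma> s) \<and> (\<forall>a. 0 < \<sigma> s a \<longrightarrow> a \<in> AvAct P s))"

text \<open>Division by zero is 0 in Isabelle, matching the convention 0/0 = 0.\<close>
definition est_up1 :: "('s::finite \<Rightarrow> 'a::finite \<Rightarrow> ('s \<Rightarrow> real) option) \<Rightarrow> ('s \<Rightarrow> 'z \<Rightarrow> real)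
    \<Rightarrow> real ^ 's \<Rightarrow> 'z \<Rightarrow> (real ^ 's) set" where
  "est_up1 P obs bel z = {bel'. \<exists>\<sigma>. valid_sched P \<sigma> \<and>
     (\<forall>s'. bel' $ s' =
        (\<Sum>s\<in>UNIV. bel $ s * (\<Sum>a\<in>UNIV. \<sigma> s a * Pr P s a s' * obs s' z))
        / (\<Sum>s\<in>UNIV. bel $ s * (\<Sum>a\<in>UNIV. \<sigma> s a * (\<Sum>t\<in>UNIV. Pr P s a t * obs t z))))}"

definition est_up :: "('s::finite \<Rightarrow> 'a::finite \<Rightarrow> ('s \<Rightarrow> real) option) \<Rightarrow> ('s \<Rightarrow> 'z \<Rightarrow> real)
    \<Rightarrow> (real ^ 's) set \<Rightarrow> 'z \<Rightarrow> (real ^ 's) set" where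
  "est_up P obs B z = (\<Union>bel\<in>B. est_up1 P obs bel z)"

definition Vert :: "('v::real_vector) set \<Rightarrow> 'v set" where
  "Vert B = {b \<in> B. b \<notin> convex hull (B - {b})}"

end

theory Submission
  imports Defs
begin

lemma hull_minus_convex:
  fixes Y :: "'v::real_vector set"
  assumes nb: "b \<notin> convex hull (Y - {b})"
  shows "convex (convex hull Y - {b})"
proof (cases "Y - {b} = {}")
  case True
  then have "Y \<subseteq> {b}" by auto
  then have "convex hull Y \<subseteq> {b}"
    by (metis convex_hull_singleton hull_mono)
  then have "convex hull Y - {b} = {}" by blast
  then show ?thesis by (metis convex_empty)
next
  case False
  let ?C = "convex hull (Y - {b})"
  have sub: "convex hull Y \<subseteq> convex hull (insert b (Y - {b}))"
    by (intro hull_mono) auto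
  have rep: "\<exists>c u. 0 < u \<and> u \<le> 1 \<and> c \<in> ?C \<and> x = (1 - u) *\<^sub>R b + u *\<^sub>R c"
    if "x \<in> convex hull Y - {b}" for x
  proof -
    have "x \<in> convex hull (insert b (Y - {b}))" using that sub by blast
    then obtain c u where cu: "0 \<le> u" "u \<le> 1" "c \<in> ?C" "x = (1 - u) *\<^sub>R b + u *\<^sub>R c"
      using False unfolding convex_hull_insert_alt by auto
    have "u \<noteq> 0" using cu that by auto
    with cu show ?thesis by (intro exI[of _ c] exI[of _ u]) auto
  qed
  show ?thesis
  proof (rule convexI)
    fix x y and p q :: real
    assume x: "x \<in> convex hull Y - {b}" and y: "y \<in> convex hull Y - {b}"
      and pq: "0 \<le> p" "0 \<le> q" "p + q = 1"
    have mem: "p *\<^sub>R x + q *\<^sub>R y \<in> convex hull Y"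
      using x y pq convex_convex_hull[of Y] unfolding convex_def by auto
    obtain c1 u where c1: "0 < u" "u \<le> 1" "c1 \<in> ?C" "x = (1 - u) *\<^sub>R b + u *\<^sub>R c1"
      using rep[OF x] by blast
    obtain c2 w where c2: "0 < w" "w \<le> 1" "c2 \<in> ?C" "y = (1 - w) *\<^sub>R b + w *\<^sub>R c2"
      using rep[OF y] by blast
    define k where "k = p * u + q * w"
    have kpos: "k > 0"
    proof (cases "p = 0")
      case True then have "q = 1" using pq by simp
      then show ?thesis using c2 True by (simp add: k_def)
    next
      case False then have "p > 0" using pq by simp
      then show ?thesis using c1 c2 pq by (simp add: k_def add_pos_nonneg)
    qed
    have "p *\<^sub>R x + q *\<^sub>R y \<noteq> b"
    proof
      assume eq: "p *\<^sub>R x + q *\<^sub>R y = b"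
      have "p *\<^sub>R x + q *\<^sub>R y = (1 - k) *\<^sub>R b + ((p * u) *\<^sub>R c1 + (q * w) *\<^sub>R c2)"
      proof -
        have "p *\<^sub>R x + q *\<^sub>R y = (p*(1-u) + q*(1-w)) *\<^sub>R b + ((p * u) *\<^sub>R c1 + (q * w) *\<^sub>R c2)"
          unfolding c1(4) c2(4) by (simp add: algebra_simps)
        moreover have "p*(1-u) + q*(1-w) = 1 - k" using pq(3) by (simp add: k_def algebra_simps)
        ultimately show ?thesis by simp
      qed
      with eq have "k *\<^sub>R b = (p * u) *\<^sub>R c1 + (q * w) *\<^sub>R c2"
        by (simp add: algebra_simps)
      then have "(1/k) *\<^sub>R (k *\<^sub>R b) = (1/k) *\<^sub>R ((p * u) *\<^sub>R c1 + (q * w) *\<^sub>R c2)"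
        by simp
      then have "b = (p * u / k) *\<^sub>R c1 + (q * w / k) *\<^sub>R c2"
        using kpos by (simp add: scaleR_add_right)
      moreover have "(p * u / k) *\<^sub>R c1 + (q * w / k) *\<^sub>R c2 \<in> ?C"
      proof (rule convexD[OF convex_convex_hull c1(3) c2(3)])
        show "0 \<le> p * u / k" using pq c1 kpos by simp
        show "0 \<le> q * w / k" using pq c2 kpos by simp
        show "p * u / k + q * w / k = 1" using kpos by (simp add: k_def add_divide_distrib[symmetric])
      qed
      ultimately show False using nb by simp
    qed
    with mem show "p *\<^sub>R x + q *\<^sub>R y \<in> convex hull Y - {b}" by simp
  qed
qed

lemma Vert_eq:
  fixes X Y :: "'v::real_vector set"
  assumes "Y \<subseteq> X" "X \<subseteq> convex hull Y"
  shows "Vert X = Vert Y"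
proof
  show "Vert X \<subseteq> Vert Y"
  proof
    fix b assume b: "b \<in> Vert X"
    then have bX: "b \<in> X" and nb: "b \<notin> convex hull (X - {b})" by (auto simp: Vert_def)
    have bY: "b \<in> Y"
    proof (rule ccontr)
      assume "b \<notin> Y"
      then have "Y \<subseteq> X - {b}" using assms by auto
      then have "convex hull Y \<subseteq> convex hull (X - {b})" by (rule hull_mono)
      with bX assms nb show False by auto
    qed
    have "convex hull (Y - {b}) \<subseteq> convex hull (X - {b})" using assms by (intro hull_mono) auto
    with nb bY show "b \<in> Vert Y" by (auto simp: Vert_def)
  qed
next
  show "Vert Y \<subseteq> Vert X"
  proof
    fix b assume b: "b \<in> Vert Y"
    then have bY: "b \<in> Y" and nb: "b \<notin> convex hull (Y - {b})" by (auto simp: Vert_def)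
    have cv: "convex (convex hull Y - {b})" by (rule hull_minus_convex[OF nb])
    have "X - {b} \<subseteq> convex hull Y - {b}" using assms by auto
    then have "convex hull (X - {b}) \<subseteq> convex hull Y - {b}"
      using cv by (intro hull_minimal) auto
    with bY assms show "b \<in> Vert X" by (auto simp: Vert_def)
  qed
qed


lemma Bel_nonneg: "b \<in> Bel \<Longrightarrow> 0 \<le> b $ s"
  by (auto simp: Bel_def is_distr_def)

lemma Pr_nonneg: "is_MDP iota P obs \<Longrightarrow> 0 \<le> Pr P s a t"
  by (auto simp: Pr_def is_MDP_def is_distr_def split: option.splits)

lemma obs_nonneg: "is_MDP iota P obs \<Longrightarrow> 0 \<le> obs s z"
  by (auto simp: is_MDP_def is_distr_def)

lemma sched_nonneg: "valid_sched P \<sigma> \<Longrightarrow> 0 \<le> \<sigma> s a"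
  by (auto simp: valid_sched_def is_distr_def)

lemma lin_comb:
  fixes K :: "'s::finite \<Rightarrow> real" and V :: "(real ^ 's) set"
  assumes "finite V"
  shows "(\<Sum>s\<in>UNIV. (\<Sum>v\<in>V. u v *\<^sub>R v) $ s * K s) = (\<Sum>v\<in>V. u v * (\<Sum>s\<in>UNIV. v $ s * K s))"
proof -
  have "(\<Sum>s\<in>UNIV. (\<Sum>v\<in>V. u v *\<^sub>R v) $ s * K s) = (\<Sum>s\<in>UNIV. \<Sum>v\<in>V. u v * (v $ s * K s))"
    by (simp add: sum_distrib_right mult.assoc)
  also have "\<dots> = (\<Sum>v\<in>V. \<Sum>s\<in>UNIV. u v * (v $ s * K s))" by (rule sum.swap)
  also have "\<dots> = (\<Sum>v\<in>V. u v * (\<Sum>s\<in>UNIV. v $ s * K s))" by (simp add: sum_distrib_left)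
  finally show ?thesis .
qed
lemma D_eq_sum_N:
  fixes v :: "real ^ 's::finite"
  shows "(\<Sum>s\<in>UNIV. v $ s * (\<Sum>a\<in>UNIV. \<sigma> s a * (\<Sum>t\<in>UNIV. Pr P s a t * obs t z)))
    = (\<Sum>t\<in>UNIV. (\<Sum>s\<in>UNIV. v $ s * (\<Sum>a\<in>UNIV. \<sigma> s a * Pr P s a t * obs t z)))"
proof -
  have inner: "(\<Sum>a\<in>UNIV. \<sigma> s a * (\<Sum>t\<in>UNIV. Pr P s a t * obs t z))
     = (\<Sum>t\<in>UNIV. \<Sum>a\<in>UNIV. \<sigma> s a * Pr P s a t * obs t z)" for s
  proof -
    have "(\<Sum>a\<in>UNIV. \<sigma> s a * (\<Sum>t\<in>UNIV. Pr P s a t * obs t z))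
       = (\<Sum>a\<in>UNIV. \<Sum>t\<in>UNIV. \<sigma> s a * Pr P s a t * obs t z)"
      by (simp add: sum_distrib_left mult.assoc)
    also have "\<dots> = (\<Sum>t\<in>UNIV. \<Sum>a\<in>UNIV. \<sigma> s a * Pr P s a t * obs t z)" by (rule sum.swap)
    finally show ?thesis .
  qed
  have "(\<Sum>s\<in>UNIV. v $ s * (\<Sum>a\<in>UNIV. \<sigma> s a * (\<Sum>t\<in>UNIV. Pr P s a t * obs t z)))
     = (\<Sum>s\<in>UNIV. \<Sum>t\<in>UNIV. v $ s * (\<Sum>a\<in>UNIV. \<sigma> s a * Pr P s a t * obs t z))"
    unfolding inner by (simp add: sum_distrib_left mult.assoc)
  also have "\<dots> = (\<Sum>t\<in>UNIV. (\<Sum>s\<in>UNIV. v $ s * (\<Sum>a\<in>UNIV. \<sigma> s a * Pr P s a t * obs t z)))"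
    by (rule sum.swap)
  finally show ?thesis .
qed

theorem lemma4:
  fixes iota :: "'s::finite \<Rightarrow> real"
    and P :: "'s \<Rightarrow> 'a::finite \<Rightarrow> ('s \<Rightarrow> real) option"
    and obs :: "'s \<Rightarrow> 'z::finite \<Rightarrow> real"
    and B :: "(real ^ 's) set"
    and z :: 'z
  assumes "is_MDP iota P obs"
    and "B \<subseteq> Bel"
    and "convex B"
    and "finite (Vert B)"
    and "B = convex hull (Vert B)"
  shows "Vert (est_up P obs B z) = Vert (est_up P obs (Vert B) z)"
proof (rule Vert_eq)
  define V where "V = Vert B"
  have VB: "V \<subseteq> B" by (auto simp: V_def Vert_def)
  have finV: "finite V" using assms(4) by (simp add: V_def)
  show "est_up P obs (Vert B) z \<subseteq> est_up P obs B z"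
    using VB by (auto simp: est_up_def V_def)
  show "est_up P obs B z \<subseteq> convex hull est_up P obs (Vert B) z"
  proof
    fix bel' assume "bel' \<in> est_up P obs B z"
    then obtain bel \<sigma> where bel: "bel \<in> B" and sch: "valid_sched P \<sigma>"
      and upd: "\<And>s'. bel' $ s' =
        (\<Sum>s\<in>UNIV. bel $ s * (\<Sum>a\<in>UNIV. \<sigma> s a * Pr P s a s' * obs s' z))
        / (\<Sum>s\<in>UNIV. bel $ s * (\<Sum>a\<in>UNIV. \<sigma> s a * (\<Sum>t\<in>UNIV. Pr P s a t * obs t z)))"
      by (auto simp: est_up_def est_up1_def)
    define Nf where "Nf v s' = (\<Sum>s\<in>UNIV. v $ s * (\<Sum>a\<in>UNIV. \<sigma> s a * Pr P s a s' * obs s' z))"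
      for v :: "real ^ 's" and s'
    define Df where "Df v = (\<Sum>s\<in>UNIV. v $ s * (\<Sum>a\<in>UNIV. \<sigma> s a * (\<Sum>t\<in>UNIV. Pr P s a t * obs t z)))"
      for v :: "real ^ 's"
    define w where "w v = (\<chi> s'. Nf v s' / Df v)" for v
    have updb: "bel' $ s' = Nf bel s' / Df bel" for s' using upd by (simp add: Nf_def Df_def)
    have wY: "w v \<in> est_up P obs (Vert B) z" if "v \<in> V" for v
      using that sch unfolding est_up_def est_up1_def V_def
      by (auto simp: w_def Nf_def Df_def)
    have Nnn: "0 \<le> Nf v s'" if "v \<in> B" for v s'
      unfolding Nf_def using that assms(2) Bel_nonneg Pr_nonneg[OF assms(1)] obs_nonneg[OF assms(1)]
        sched_nonneg[OF sch]
      by (auto intro!: sum_nonneg mult_nonneg_nonneg)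
    have DN: "Df v = (\<Sum>t\<in>UNIV. Nf v t)" for v unfolding Df_def Nf_def by (rule D_eq_sum_N)
    have Dnn: "0 \<le> Df v" if "v \<in> B" for v using Nnn[OF that] by (simp add: DN sum_nonneg)
    have D0N: "Nf v s' = 0" if "v \<in> B" "Df v = 0" for v s'
      using that Nnn[OF that(1)] by (simp add: DN sum_nonneg_eq_0_iff)
    have "bel \<in> convex hull V" using bel assms(5) by (simp add: V_def)
    then obtain u where u0: "\<forall>v\<in>V. 0 \<le> u v" and u1: "sum u V = 1"
      and ub: "(\<Sum>v\<in>V. u v *\<^sub>R v) = bel"
      using convex_hull_finite[OF finV] by auto
    have Nlin: "Nf bel s' = (\<Sum>v\<in>V. u v * Nf v s')" for s'
      unfolding Nf_def ub[symmetric] by (rule lin_comb[OF finV])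
    have Dlin: "Df bel = (\<Sum>v\<in>V. u v * Df v)"
      unfolding Df_def ub[symmetric] by (rule lin_comb[OF finV])
    show "bel' \<in> convex hull est_up P obs (Vert B) z"
    proof (cases "Df bel = 0")
      case True
      have "\<exists>v\<in>V. u v \<noteq> 0"
      proof (rule ccontr)
        assume "\<not> ?thesis" then have "sum u V = 0" by simp
        with u1 show False by simp
      qed
      then obtain v where v: "v \<in> V" "u v \<noteq> 0" by blast
      have nn: "0 \<le> u v * Df v" if "v \<in> V" for v
        using that u0 VB Dnn by (intro mult_nonneg_nonneg) auto
      have "(\<Sum>v\<in>V. u v * Df v) = 0" using True Dlin by simp
      moreover have "((\<Sum>v\<in>V. u v * Df v) = 0) = (\<forall>v\<in>V. u v * Df v = 0)"
        by (rule sum_nonneg_eq_0_iff[OF finV]) (rule nn)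
      ultimately have "\<forall>v\<in>V. u v * Df v = 0" by simp
      then have "u v * Df v = 0" using v(1) by (rule bspec)
      then have Dv: "Df v = 0" using v(2) by simp
      have "bel' = 0" using True by (simp add: vec_eq_iff updb)
      moreover have "w v = 0" using Dv by (simp add: vec_eq_iff w_def)
      ultimately have "bel' = w v" by simp
      then show ?thesis using wY[OF v(1)] by (simp add: hull_inc)
    next
      case False
      then have Dpos: "0 < Df bel" using Dnn[OF bel] by simp
      have "bel' = (\<Sum>v\<in>V. (u v * Df v / Df bel) *\<^sub>R w v)"
      proof (subst vec_eq_iff, intro allI)
        fix s'
        have "(\<Sum>v\<in>V. (u v * Df v / Df bel) *\<^sub>R w v) $ s'
            = (\<Sum>v\<in>V. u v * Df v / Df bel * (Nf v s' / Df v))"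
          by (simp add: w_def)
        also have "\<dots> = (\<Sum>v\<in>V. u v * Nf v s' / Df bel)"
        proof (rule sum.cong[OF refl])
          fix v assume "v \<in> V"
          then show "u v * Df v / Df bel * (Nf v s' / Df v) = u v * Nf v s' / Df bel"
            using D0N[of v s'] VB by (cases "Df v = 0") auto
        qed
        also have "\<dots> = Nf bel s' / Df bel"
          by (simp add: Nlin sum_divide_distrib)
        finally show "bel' $ s' = (\<Sum>v\<in>V. (u v * Df v / Df bel) *\<^sub>R w v) $ s'"
          by (simp add: updb)
      qed
      also have "\<dots> \<in> convex hull est_up P obs (Vert B) z"
      proof (rule convex_sum[OF finV convex_convex_hull])
        show "(\<Sum>v\<in>V. u v * Df v / Df bel) = 1"
          using Dpos by (simp add: Dlin sum_divide_distrib[symmetric])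
        show "\<And>v. v \<in> V \<Longrightarrow> 0 \<le> u v * Df v / Df bel"
          using u0 Dnn VB Dpos by (auto intro!: divide_nonneg_pos mult_nonneg_nonneg)
        show "\<And>v. v \<in> V \<Longrightarrow> w v \<in> convex hull est_up P obs (Vert B) z"
          using wY by (simp add: hull_inc)
      qed
      finally show ?thesis .
    qed
  qed
qed

end
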